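(* For every positive integer $m$ and every integer $n\ge 0$, \[ \sum_{i=0}^{n} q^{-2i}q^{m(i^2+2i)}\frac{(1-q^{i+1})^3(1+q^{i+1})}{(1-q)(1-q^{n+1})(1-q^{n+2})} =\sum_{0\leq k_m\leq\dots\leq k_1\leq n}q^{-2k_m}q^{\sum_{j=1}^m(k_j^2+2k_j)} \frac{(q)_n^2}{(q)_{k_m}^2(q)_{n-k_1}\prod_{j=1}^{m-1}(q)_{k_j-k_{j+1}}} \cdot\frac{(1-q^{n+1})(1-q^{n+2})}{(1-q^{n-k_m+1})(1-q^{n-k_m+2})} \] as rational functions of $q$ (the empty product for $m=1$ equals $1$).
   Context: $(q)_k=\prod_{l=1}^{k}(1-q^l)$ for $k\ge0$, $(q)_0=1$. *)

theory Defs
  imports "HOL-Computational_Algebra.Polynomial" "HOL-Computational_Algebra.Fraction_Field"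
begin

type_synonym ratfun = "rat poly fract"

definition qv :: ratfun where
  "qv = Fract [:0, 1:] 1"

definition qpoch :: "'a::comm_ring_1 \<Rightarrow> nat \<Rightarrow> 'a" where
  "qpoch q k = (\<Prod>l=1..k. (1 - q ^ l))"

definition chains :: "nat \<Rightarrow> nat \<Rightarrow> (nat \<Rightarrow> nat) set" where
  "chains m n = {k. (\<forall>j\<in>{1..m}. k j \<le> n) \<and> (\<forall>j\<in>{1..<m}. k (Suc j) \<le> k j)
                    \<and> (\<forall>j. j \<notin> {1..m} \<longrightarrow> k j = 0)}"

end

theory Submission
  imports Defs
begin


lemma alg3:
  fixes q x y u ir R1 S PA PB PC PD Dx Dy Ex Ey Ry R0 T1 G1 G3 NR K1 K2 K3 K4 K5 K6 K7 K8 K9 iR R1' Ry' :: "'a::field"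
  assumes nz: "q \<noteq> 0" "PC \<noteq> 0" "PD \<noteq> 0" "Dx \<noteq> 0" "Dy \<noteq> 0" "Ex \<noteq> 0" "T1 \<noteq> 0" "G1 \<noteq> 0"
  and k: "K1 = PC*Dx*Dy" "K2 = PD*Ex" "K3 = PC*Dx" "K4 = PA" "K5 = PB*Ey" "K6 = PC*Dx" "K7 = PD*Ex"
     "K8 = PA*NR" "K9 = PC*Dx*Dy" "iR = ir/(q*q)" "R1' = R1" "Ry' = Ry"
  and e: "S = 1-q*q*x*x" "Dy = 1-q*q*y" "Ex = 1-q^4*x*x*y" "Ey = 1-q^5*x*x*y*u" "Ry = 1-q*q*x"
     "R0 = 1-x" "T1 = 1-q*q*x*y" "G1 = 1-q*u" "G3 = 1-q^3*u" "NR = 1-q^3*y*u"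
  shows "(ir*R1^2*S*PA*PB) * (1/(K1*K2)) - (G3/(q^2*T1^2*G1)) * ((ir*R1^2*S*PA*PB) * (1/(K3*PD)))
   = -(R1'^2*Ry'^2*iR*K4*K5/(T1^2*G1*K6*K7)) - -(R0^2*R1^2*ir*K8*PB/(T1^2*G1*K9*PD))"
proof -
  have "(ir*R1^2*S*PA*PB) * (1/((PC*Dx*Dy)*(PD*Ex)))
     - (G3/(q^2*T1^2*G1)) * ((ir*R1^2*S*PA*PB) * (1/((PC*Dx)*PD)))
   - (-(R1^2*Ry^2*(ir/(q*q))*PA*(PB*Ey)/(T1^2*G1*(PC*Dx)*(PD*Ex)))
     - -(R0^2*R1^2*ir*(PA*NR)*PB/(T1^2*G1*(PC*Dx*Dy)*PD)))
   = ir*R1^2*PA*PB*(S*q^2*T1^2*G1 - G3*S*Dy*Ex + Ry^2*Ey*Dy - q^2*R0^2*NR*Ex)/(q^2*T1^2*G1*PC*Dx*Dy*PD*Ex)"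
    using nz by (simp add: field_simps power2_eq_square eval_nat_numeral)
  also have "S*q^2*T1^2*G1 - G3*S*Dy*Ex + Ry^2*Ey*Dy - q^2*R0^2*NR*Ex = 0"
    unfolding e by algebra
  finally show ?thesis unfolding k by simp
qed

lemma alg4:
  fixes q z u it U S2 Pg G1 Pb Ba Pc Cc Ub Cd Bd Gb G3 Z0 PA K1 K2 iT U' S2' K3 K4 K5 K6 K7 K8 K9 K10 :: "'a::field"
  assumes nz: "q \<noteq> 0" "U \<noteq> 0" "G1 \<noteq> 0" "Ba \<noteq> 0" "Pc \<noteq> 0" "Cc \<noteq> 0" "Cd \<noteq> 0"
  and k: "PA = Pg*G1" "K1 = Ba" "K2 = Pc*Cc" "iT = it/(q*q)" "U' = Ub" "S2' = Cd" "K3 = Pg" "K4 = Pb*Bd"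
     "K5 = 1" "K6 = Pc*Cc*Cd" "K7 = 1" "K8 = Pc" "K9 = Pg*G1*Gb" "K10 = Ba"
  and e: "U = 1-q*z" "S2 = 1-q*q*z*z" "G1 = 1-q*u" "Ba = 1-q" "Cc = 1-q^3*z*z" "Ub = 1-q*q*z"
     "Bd = 1-q^4*z*z*u" "Gb = 1-q*q*u" "G3 = 1-q^3*u" "Z0 = 1-z"
  shows "(it*U^2*S2*PA*Pb)*(1/(K1*K2)) + (iT*U'^2*S2'*K3*K4)*(1/(K5*K6))
     - (G3/(q^2*U^2*G1))*((it*U^2*S2*PA*Pb)*(1/(K7*K8)))
   = -(-(Z0^2*U^2*it*K9*Pb/(U^2*G1*K10*K8)))"
proof -
  have "(it*U^2*S2*(Pg*G1)*Pb)*(1/(Ba*(Pc*Cc))) + ((it/(q*q))*Ub^2*Cd*Pg*(Pb*Bd))*(1/(1*(Pc*Cc*Cd)))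
     - (G3/(q^2*U^2*G1))*((it*U^2*S2*(Pg*G1)*Pb)*(1/(1*Pc)))
     - (-(-(Z0^2*U^2*it*(Pg*G1*Gb)*Pb/(U^2*G1*Ba*Pc))))
   = it*Pg*Pb*(q^2*U^2*S2*G1 + Ba*Ub^2*Bd - Ba*G3*S2*Cc - q^2*Z0^2*Gb*Cc)/(q^2*Ba*Cc*Pc)"
    using nz by (simp add: field_simps power2_eq_square eval_nat_numeral)
  also have "q^2*U^2*S2*G1 + Ba*Ub^2*Bd - Ba*G3*S2*Cc - q^2*Z0^2*Gb*Cc = 0"
    unfolding e by algebra
  finally show ?thesis unfolding k by simp
qed

lemma alg5:
  fixes q a it PN Pt U X1 X2 X3 iT PSt Y1 Y2 :: "'a::field"
  assumes nz: "q \<noteq> 0" "Pt \<noteq> 0" "U \<noteq> 0" "X1 \<noteq> 0" "X2 \<noteq> 0" "X3 \<noteq> 0"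
  and k: "iT = it/(q*q)" "PSt = Pt*U" "Y1 = X1" "Y2 = X2"
  shows "a*iT*PN^2/(PSt^2*Y1*Y2) = X3/(q^2*U^2*X1) * (a*it*PN^2/(Pt^2*X2*X3))"
  unfolding k using nz by (simp add: field_simps power2_eq_square)


lemma alg6:
  fixes A B PN X Y :: "'a::field"
  assumes "A \<noteq> 0" "B \<noteq> 0" "X \<noteq> 0" "Y \<noteq> 0"
  shows "A^2*B*PN*(PN*X*Y)/(A*B) = A*(PN*X*Y)^2/(X*Y)"
  using assms by (simp add: field_simps power2_eq_square)


lemma alg7:
  fixes iv W x R S c A B Pn Pa Pb :: "'a::field"
  assumes nz: "c \<noteq> 0" "A \<noteq> 0" "B \<noteq> 0" "Pn \<noteq> 0" "Pa \<noteq> 0" "Pb \<noteq> 0"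
  and e: "R = 1 - x" "S = 1 - x*x"
  shows "iv*W*(R^3*(1+x))/(c*A*B) = Pn^2*A*B*((W*(iv*R^2*S*Pa*Pb/(c*(Pn*A*B)^2)))*(1/(Pa*Pb)))"
proof -
  have "R^3*(1+x) = R^2*S" unfolding e by (simp add: power2_eq_square power3_eq_cube algebra_simps)
  then show ?thesis using nz by (simp add: field_simps power2_eq_square)
qed



lemma chains_Suc:
  assumes "m \<ge> 1"
  shows "chains (Suc m) L = (\<lambda>(k,s). k(Suc m := s)) ` (SIGMA k:chains m L. {..k m})"
proof
  show "chains (Suc m) L \<subseteq> (\<lambda>(k,s). k(Suc m := s)) ` (SIGMA k:chains m L. {..k m})"
  proof
    fix k' assume k': "k' \<in> chains (Suc m) L"
    let ?k = "k'(Suc m := 0)"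
    have "?k \<in> chains m L" using k' unfolding chains_def by auto
    moreover have "k' (Suc m) \<le> ?k m" using k' assms unfolding chains_def
      by (auto dest: bspec[where x=m])
    moreover have "k' = ?k(Suc m := k' (Suc m))" by simp
    ultimately show "k' \<in> (\<lambda>(k,s). k(Suc m := s)) ` (SIGMA k:chains m L. {..k m})"
      by (intro image_eqI[where x="(?k, k' (Suc m))"]) auto
  qed
next
  show "(\<lambda>(k,s). k(Suc m := s)) ` (SIGMA k:chains m L. {..k m}) \<subseteq> chains (Suc m) L"
  proof
    fix x assume "x \<in> (\<lambda>(k,s). k(Suc m := s)) ` (SIGMA k:chains m L. {..k m})"
    then obtain k s where x: "x = k(Suc m := s)" and k: "k \<in> chains m L" and s: "s \<le> k m" by auto
    have km: "k m \<le> L" using k assms unfolding chains_def by auto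
    have a: "\<forall>j\<in>{1..Suc m}. (k(Suc m := s)) j \<le> L"
      using k s km unfolding chains_def by auto
    have b: "\<forall>j\<in>{1..<Suc m}. (k(Suc m := s)) (Suc j) \<le> (k(Suc m := s)) j"
    proof
      fix j assume j: "j \<in> {1..<Suc m}"
      show "(k(Suc m := s)) (Suc j) \<le> (k(Suc m := s)) j"
      proof (cases "j = m")
        case True then show ?thesis using s by simp
      next
        case False then show ?thesis using k j unfolding chains_def by auto
      qed
    qed
    have c: "\<forall>j. j \<notin> {1..Suc m} \<longrightarrow> (k(Suc m := s)) j = 0"
      using k unfolding chains_def by auto
    show "x \<in> chains (Suc m) L"
      unfolding chains_def x using a b c by blast
  qed
qed

lemma chains_inj:
  "inj_on (\<lambda>(k,s). k(Suc m := s)) (SIGMA k:chains m L. {..k m})"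
proof (rule inj_onI, clarify)
  fix k s k2 s2 assume k: "k \<in> chains m L" "k2 \<in> chains m L" and e: "k(Suc m := s) = k2(Suc m := s2)"
  have "s = s2" using fun_cong[OF e, of "Suc m"] by simp
  moreover have "k = k2"
  proof
    fix j show "k j = k2 j"
    proof (cases "j = Suc m")
      case True then show ?thesis using k unfolding chains_def by auto
    next
      case False then show ?thesis using fun_cong[OF e, of j] by simp
    qed
  qed
  ultimately show "k = k2 \<and> s = s2" by simp
qed

lemma chains_one: "chains 1 L = (\<lambda>s j. if j = 1 then s else 0) ` {..L}"
proof
  show "chains 1 L \<subseteq> (\<lambda>s j. if j = 1 then s else 0) ` {..L}"
  proof
    fix k assume k: "k \<in> chains 1 L"
    then have "k = (\<lambda>j. if j = 1 then k 1 else 0)" unfolding chains_def by auto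
    moreover have "k 1 \<le> L" using k unfolding chains_def by auto
    ultimately show "k \<in> (\<lambda>s j. if j = 1 then s else 0) ` {..L}" by blast
  qed
qed (auto simp: chains_def)

lemma chains_one_inj: "inj_on (\<lambda>s j. if j = 1 then s else (0::nat)) A"
  by (rule inj_onI) (drule fun_cong[where x=1], simp)

lemma finite_chains: "m \<ge> 1 \<Longrightarrow> finite (chains m L)"
proof (induction m rule: nat_induct_at_least)
  case base then show ?case unfolding chains_one by simp
next
  case (Suc m) then show ?case unfolding chains_Suc[OF Suc(1)] by auto
qed



definition qw :: "'a::field \<Rightarrow> nat \<Rightarrow> 'a" where "qw q k = q ^ (k*k + 2*k)"

lemma alg1:
  fixes q x y z a b c W A1 A2 A3 A4 A5 A6 Q1 Q2 Q3 :: "'a::field"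
  assumes nz: "a \<noteq> 0" "b \<noteq> 0" "c \<noteq> 0" "A1 \<noteq> 0" "A2 \<noteq> 0" "A3 \<noteq> 0" "A4 \<noteq> 0" "A5 \<noteq> 0" "A6 \<noteq> 0"
  and e: "A1 = 1-q*x" "A2 = 1-q*q*x" "A3 = 1-q*q*z*z*y" "A5 = 1-q*q*x*y" "A6 = 1-q^4*z*z*y*x"
     "Q1 = q*x" "Q2 = q*q*x" "Q3 = q^3*z*z*y*y"
  shows "W/((a*A1*A2)*b*(c*A3)) - 1/(A5*A6) * (W/((a*A1)*b*(c*A3)))
   = -(Q1*(W*Q3)*A4/((a*A1)*(b*A4)*(c*A3)))*(1/(A5*A6)) - -(Q2*W*(1-y)/((a*A1*A2)*b*c))*(1/(A5*A6))"
proof -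
  have "W/((a*A1*A2)*b*(c*A3)) - 1/(A5*A6) * (W/((a*A1)*b*(c*A3)))
   - (-(Q1*(W*Q3)*A4/((a*A1)*(b*A4)*(c*A3)))*(1/(A5*A6)) - -(Q2*W*(1-y)/((a*A1*A2)*b*c))*(1/(A5*A6)))
   = W*(A5*A6 - A2 + Q1*Q3*A2 - Q2*(1-y)*A3)/(a*A1*A2*b*c*A3*A5*A6)"
    using nz by (simp add: field_simps)
  also have "A5*A6 - A2 + Q1*Q3*A2 - Q2*(1-y)*A3 = 0"
    unfolding e by algebra
  finally show ?thesis by simp
qed

lemma alg2:
  fixes q y z b c W B1 B3 B4 B5 Q :: "'a::field"
  assumes nz: "b \<noteq> 0" "c \<noteq> 0" "B1 \<noteq> 0" "B3 \<noteq> 0" "B4 \<noteq> 0" "B5 \<noteq> 0"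
  and e: "B1 = 1 - q" "B3 = 1-q*q*z*z*y" "B4 = 1-q*y" "B5 = 1-q^3*z*z*y" "Q = q^3*z*z*y*y"
  shows "W/(B1*b*(c*B3)) + (W*Q)/(1*(b*B4)*(c*B3*B5)) - 1/(B4*B5) * (W/(1*b*(c*B3)))
     = - (-(q*W*(1-y)/(B1*b*c))*(1/(B4*B5)))"
proof -
  have "W/(B1*b*(c*B3)) + (W*Q)/(1*(b*B4)*(c*B3*B5)) - 1/(B4*B5) * (W/(1*b*(c*B3)))
     - (- (-(q*W*(1-y)/(B1*b*c))*(1/(B4*B5))))
     = W*(B4*B5 + B1*Q - B1 - q*(1-y)*B3)/(B1*b*c*B3*B4*B5)"
    using nz by (simp add: field_simps)
  also have "B4*B5 + B1*Q - B1 - q*(1-y)*B3 = 0"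
    unfolding e by algebra
  finally show ?thesis by simp
qed


locale qctx =
  fixes q :: "'a::field"
  assumes q0: "q \<noteq> 0" and qn: "\<And>l. 0 < l \<Longrightarrow> q ^ l \<noteq> 1"
begin

abbreviation "P \<equiv> qpoch q"

lemma P0[simp]: "P 0 = 1" by (simp add: qpoch_def)
lemma PS: "P (Suc k) = P k * (1 - q ^ Suc k)"
  by (simp add: qpoch_def)
lemma PA1: "P (k+1) = P k * (1 - q ^ (k+1))"
  by (simp add: qpoch_def)
lemma PE0: "k = m \<Longrightarrow> P k = P m" by simp
lemma PE1: assumes "k = m+1" "e = k" shows "P k = P m * (1 - q^e)"
  unfolding assms(2) assms(1) by (rule PA1)
lemma PE2: assumes "k = m+2" "e1 = m+1" "e2 = m+2" shows "P k = P m * (1 - q^e1) * (1 - q^e2)"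
proof -
  have h: "m+2 = (m+1)+1" by simp
  show ?thesis unfolding assms h PA1 ..
qed
lemma om_nz: "0 < l \<Longrightarrow> 1 - q ^ l \<noteq> 0" using qn[of l] by auto
lemma om1: "1 - q \<noteq> 0" using om_nz[of 1] by simp
lemma P_nz: "P k \<noteq> 0"
proof (induction k)
  case (Suc k)
  have "1 - q^Suc k \<noteq> 0" by (rule om_nz) simp
  with Suc show ?case unfolding PS by (simp only: mult_eq_0_iff) blast
qed simp

definition "KF r M j = qw q (r+j) / (P (M-j) * P j * P (2*r+j+2))"
definition "KC r M = 1/((1-q^(M+1))*(1-q^(2*r+M+3)))"
definition "KH r M j = -(q^(M+1-j) * qw q (r+j) * (1-q^j) / (P (M+1-j) * P j * P (2*r+j+1))) * KC r M"

lemma KL_term: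
  assumes "j < M"
  shows "KF r (Suc M) j - KC r M * KF r M j = KH r M (Suc j) - KH r M j"
proof -
  obtain d where M: "M = j + d + 1" using assms by (metis add.commute less_imp_Suc_add Suc_eq_plus1 add.assoc)
  define W where "W = qw q (r+j)"
  have P2: "P (Suc (Suc d)) = (P d * (1 - q^Suc d) * (1 - q^Suc (Suc d)))" by (simp only: PS)
  have Pc: "P (2*r+j+2) = P (2*r+j+1) * (1 - q^(2*r+j+2))"
    using PS[of "2*r+j+1"] by simp
  have Pj: "P (Suc j) = P j * (1 - q^Suc j)" by (rule PS)
  have P1: "P (Suc d) = P d * (1 - q^Suc d)" by (rule PS)
  have w1: "qw q (r + Suc j) = W * q^(2*r+2*j+3)"
  proof -
    have "(r+Suc j)*(r+Suc j) + 2*(r+Suc j) = ((r+j)*(r+j)+2*(r+j)) + (2*r+2*j+3)" by (simp add: algebra_simps)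
    then show ?thesis unfolding W_def qw_def by (simp only: power_add)
  qed
  have e1: "KF r (Suc M) j = W / ((P d * (1 - q^Suc d) * (1 - q^Suc (Suc d))) * P j * (P (2*r+j+1) * (1 - q^(2*r+j+2))))"
    unfolding KF_def W_def
    by (subst Pc[symmetric], subst P2[symmetric]) (simp add: M)
  have e2: "KF r M j = W / ((P d * (1 - q^Suc d)) * P j * (P (2*r+j+1) * (1 - q^(2*r+j+2))))"
    unfolding KF_def W_def
    by (subst Pc[symmetric], subst P1[symmetric]) (simp add: M)
  have e3: "KH r M (Suc j) = -(q^Suc d * (W * q^(2*r+2*j+3)) * (1 - q^Suc j) / ((P d * (1 - q^Suc d)) * (P j * (1 - q^Suc j)) * (P (2*r+j+1) * (1 - q^(2*r+j+2))))) * (1/((1-q^(M+1))*(1-q^(2*r+M+3))))"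
    unfolding KH_def KC_def w1[symmetric]
    by (subst Pc[symmetric], subst P1[symmetric], subst Pj[symmetric]) (simp add: M)
  have e4: "KH r M j = -(q^Suc (Suc d) * W * (1 - q^j) / ((P d * (1 - q^Suc d) * (1 - q^Suc (Suc d))) * P j * P (2*r+j+1))) * (1/((1-q^(M+1))*(1-q^(2*r+M+3))))"
    unfolding KH_def KC_def W_def
    by (subst P2[symmetric]) (simp add: M)
  have e5: "KC r M = 1/((1-q^(M+1))*(1-q^(2*r+M+3)))" by (simp add: KC_def)
  show ?thesis
    unfolding e1 e2 e3 e4 e5
    apply (rule alg1[where q=q and x="q^d" and y="q^j" and z="q^r"])
    apply (simp_all only: P_nz not_False_eq_True)
    apply (rule om_nz; simp add: M)+
    apply (simp_all add: M power_add power_mult power2_eq_square mult_ac)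
    done
qed

lemma KL_last:
  "KF r (Suc M) M + KF r (Suc M) (Suc M) - KC r M * KF r M M = - KH r M M"
proof -
  define W where "W = qw q (r+M)"
  have Pc: "P (2*r+M+2) = P (2*r+M+1) * (1 - q^(2*r+M+2))"
    using PS[of "2*r+M+1"] by simp
  have Pc2: "P (2*r+Suc M+2) = P (2*r+M+1) * (1 - q^(2*r+M+2)) * (1 - q^(2*r+M+3))"
  proof -
    have a: "2*r+Suc M+2 = ((2*r+M+1)+1)+1" "2*r+M+3 = ((2*r+M+1)+1)+1" "2*r+M+2 = (2*r+M+1)+1" by simp_all
    show ?thesis by (simp only: a PA1)
  qed
  have P1: "P (Suc 0) = 1 - q" by (simp add: PS)
  have w1: "qw q (r + Suc M) = W * q^(2*r+2*M+3)"
  proof -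
    have "(r+Suc M)*(r+Suc M) + 2*(r+Suc M) = ((r+M)*(r+M)+2*(r+M)) + (2*r+2*M+3)" by (simp add: algebra_simps)
    then show ?thesis unfolding W_def qw_def by (simp only: power_add)
  qed
  have e1: "KF r (Suc M) M = W / ((1-q) * P M * (P (2*r+M+1) * (1 - q^(2*r+M+2))))"
    unfolding KF_def W_def by (subst Pc[symmetric], subst P1[symmetric]) (simp add: Suc_diff_le)
  have e2: "KF r (Suc M) (Suc M) = (W * q^(2*r+2*M+3)) / (1 * (P M * (1 - q^(M+1))) * (P (2*r+M+1) * (1 - q^(2*r+M+2)) * (1 - q^(2*r+M+3))))"
    unfolding KF_def w1 by (subst Pc2[symmetric]) (simp add: PS)
  have e3: "KF r M M = W / (1 * P M * (P (2*r+M+1) * (1 - q^(2*r+M+2))))"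
    unfolding KF_def W_def by (subst Pc[symmetric]) simp
  have e4: "KH r M M = -(q * W * (1 - q^M) / ((1-q) * P M * P (2*r+M+1))) * (1/((1-q^(M+1))*(1-q^(2*r+M+3))))"
    unfolding KH_def KC_def W_def by (subst P1[symmetric]) (simp add: Suc_diff_le)
  have e5: "KC r M = 1/((1-q^(M+1))*(1-q^(2*r+M+3)))" by (simp add: KC_def)
  show ?thesis
    unfolding e1 e2 e3 e4 e5
    apply (rule alg2[where q=q and y="q^M" and z="q^r"])
    apply (simp_all only: P_nz om1 not_False_eq_True)
    apply (rule om_nz; simp)+
    apply (simp_all add: power_add power_mult power2_eq_square mult_ac)
    done
qed

lemma KH0: "KH r M 0 = 0" by (simp add: KH_def)

lemma KL: "(\<Sum>j\<le>M. KF r M j) = qw q r / (P M * P (2*r+M+2))"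
proof (induction M)
  case 0
  then show ?case by (simp add: KF_def)
next
  case (Suc M)
  have "(\<Sum>j\<le>Suc M. KF r (Suc M) j) = (\<Sum>j<M. KF r (Suc M) j) + (KF r (Suc M) M + KF r (Suc M) (Suc M))"
    by (simp add: lessThan_Suc_atMost[symmetric])
  also have "(\<Sum>j<M. KF r (Suc M) j) = (\<Sum>j<M. KC r M * KF r M j + (KH r M (Suc j) - KH r M j))"
    by (rule sum.cong) (auto simp: KL_term[symmetric])
  also have "\<dots> = KC r M * (\<Sum>j<M. KF r M j) + (KH r M M - KH r M 0)"
    by (simp add: sum.distrib sum_distrib_left sum_lessThan_telescope)
  also have "KF r (Suc M) M + KF r (Suc M) (Suc M) = KC r M * KF r M M - KH r M M"
    using KL_last[of r M] by (simp add: algebra_simps)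
  finally have "(\<Sum>j\<le>Suc M. KF r (Suc M) j) = KC r M * (\<Sum>j\<le>M. KF r M j)"
    by (simp add: KH0 lessThan_Suc_atMost[symmetric] algebra_simps)
  also have "\<dots> = qw q r / (P (Suc M) * P (2*r+Suc M+2))"
  proof -
    have a: "P (Suc M) = P M * (1-q^(M+1))" by (simp add: PS)
    have b: "P (2*r+Suc M+2) = P (2*r+M+2) * (1-q^(2*r+M+3))"
    proof -
      have a: "2*r+Suc M+2 = (2*r+M+2)+1" "2*r+M+3 = (2*r+M+2)+1" by simp_all
      show ?thesis by (simp only: a PA1)
    qed
    show ?thesis unfolding Suc.IH KC_def a b by (simp add: divide_inverse inverse_mult_distrib ac_simps)
  qed
  finally show ?case .
qed

definition "SA N r = inverse(q^(2*r)) * (1-q^(r+1))^2 * (1-q^(2*r+2)) * P (N-r) * P (N+r+2)"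
definition "SK t r = 1/(P (t-r) * P (t+r+2))"
definition "SB N t = (1-q)*inverse(q^(2*t))*P (N+2)^2/(P t^2 * (1-q^(N-t+1)) * (1-q^(N-t+2)))"
definition "SE N t = (1-q^(N-t+2))/(q^2*(1-q^(t+1))^2*(1-q^(N-t)))"
definition "SH N t r = -((1-q^r)^2*(1-q^(r+1))^2*inverse(q^(2*r))*P (N+1-r)*P (N+r+2)/((1-q^(t+1))^2*(1-q^(N-t))*P (t+1-r)*P (t+r+2)))"

lemma S_term:
  assumes "r < t" "t < N"
  shows "SA N r * SK (Suc t) r - SE N t * (SA N r * SK t r) = SH N t (Suc r) - SH N t r"
proof -
  obtain d where t: "t = r + d + 1" using assms(1) by (metis add.commute less_imp_Suc_add Suc_eq_plus1 add.assoc)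
  obtain g where N: "N = r + d + g + 2" using assms(2) t by (metis add.commute less_imp_Suc_add Suc_eq_plus1 add.assoc add_2_eq_Suc')
  show ?thesis
    unfolding SA_def SK_def SE_def SH_def
    apply (rule alg3[where q=q and x="q^r" and y="q^d" and u="q^g" and PC="P d" and Dx="1-q^(d+1)"
       and Dy="1-q^(d+2)" and Ex="1-q^(2*r+d+4)" and Ey="1-q^(2*r+d+g+5)" and NR="1-q^(d+g+3)"
       and Ry="1-q^(r+2)"])
    apply (simp_all only: P_nz q0 not_False_eq_True)
    apply (rule om_nz; simp add: t N)+
    apply (rule PE2; simp add: t N)
    apply (rule PE1; simp add: t N)
    apply (rule PE1; simp add: t N)
    apply (rule PE0; simp add: t N)
    apply (rule PE1; simp add: t N)
    apply (rule PE1; simp add: t N)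
    apply (rule PE1; simp add: t N)
    apply (rule PE1; simp add: t N)
    apply (rule PE2; simp add: t N)
    apply (simp add: power_add divide_inverse inverse_mult_distrib mult_ac)
    apply (simp_all add: t N power_add power_mult power2_eq_square eval_nat_numeral mult_ac)
    done
qed

lemma S_last:
  assumes "t < N"
  shows "SA N t * SK (Suc t) t + SA N (Suc t) * SK (Suc t) (Suc t) - SE N t * (SA N t * SK t t) = - SH N t t"
proof -
  obtain g where N: "N = t + g + 1" using assms by (metis add.commute less_imp_Suc_add Suc_eq_plus1 add.assoc)
  show ?thesis
    unfolding SA_def SK_def SE_def SH_def
    apply (rule alg4[where q=q and z="q^t" and u="q^g" and Pg="P g" and Pc="P (2*t+2)" and Cc="1-q^(2*t+3)"
       and Cd="1-q^(2*t+4)" and Bd="1-q^(2*t+g+4)" and Gb="1-q^(g+2)" and Ba="1-q" and Ub="1-q^(t+2)"])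
    apply (simp_all only: P_nz q0 om1 not_False_eq_True)
    apply (rule om_nz; simp add: N)+
    apply (rule PE1; simp add: N)
    apply (simp add: PS)
    apply (rule PE1; simp add: N)
    apply (simp add: power_add divide_inverse inverse_mult_distrib mult_ac)
    apply (simp add: power_add eval_nat_numeral mult_ac)
    apply (simp add: power_add eval_nat_numeral mult_ac)
    apply (rule PE0; simp add: N)
    apply (rule PE1; simp add: N)
    apply simp
    apply (rule PE2; simp add: N)
    apply simp
    apply (rule PE0; simp add: N)
    apply (rule PE2; simp add: N)
    apply (simp add: PS)
    apply (simp_all add: N power_add power_mult power2_eq_square eval_nat_numeral mult_ac)
    done
qed

lemma SB_step:
  assumes "t < N"
  shows "SB N (Suc t) = SE N t * SB N t"
proof -
  obtain g where N: "N = t + g + 1" using assms by (metis add.commute less_imp_Suc_add Suc_eq_plus1 add.assoc)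
  show ?thesis
    unfolding SB_def SE_def
    apply (rule alg5[where q=q and Pt="P t" and U="1-q^(t+1)"])
    apply (simp_all only: P_nz q0 not_False_eq_True)
    apply (rule om_nz; simp add: N)+
    apply (simp add: power_add divide_inverse inverse_mult_distrib mult_ac)
    apply (simp add: PS)
    apply (simp_all add: N)
    done
qed

lemma SH0: "SH N t 0 = 0" by (simp add: SH_def)

lemma S_base: "SA N 0 * SK 0 0 = SB N 0"
proof -
  have a: "P (N+2) = P N * (1-q^(N+1)) * (1-q^(N+2))" by (rule PE2) simp_all
  have b: "P 2 = (1-q)*(1-q^2)" using PE2[of 2 0 1 2] by simp
  have nz: "1-q^(N+1) \<noteq> 0" "1-q^(N+2) \<noteq> 0" "1 - q^2 \<noteq> 0" by (rule om_nz; simp)+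
  have e1: "SA N 0 * SK 0 0 = (1-q)^2*(1-q^2)*P N*P (N+2)/P 2" unfolding SA_def SK_def by (simp add: numeral_2_eq_2)
  have e2: "SB N 0 = (1-q)*P (N+2)^2/((1-q^(N+1))*(1-q^(N+2)))" unfolding SB_def by simp
  show ?thesis unfolding e1 e2 a b
    by (rule alg6) (simp_all only: nz om1 not_False_eq_True)
qed

lemma S_pair: "t \<le> N \<Longrightarrow> (\<Sum>r\<le>t. SA N r * SK t r) = SB N t"
proof (induction t)
  case 0
  then show ?case using S_base by simp
next
  case (Suc t)
  then have tN: "t < N" by simp
  have "(\<Sum>r\<le>Suc t. SA N r * SK (Suc t) r) = (\<Sum>r<t. SA N r * SK (Suc t) r) + (SA N t * SK (Suc t) t + SA N (Suc t) * SK (Suc t) (Suc t))"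
    by (simp add: lessThan_Suc_atMost[symmetric])
  also have "(\<Sum>r<t. SA N r * SK (Suc t) r) = (\<Sum>r<t. SE N t * (SA N r * SK t r) + (SH N t (Suc r) - SH N t r))"
    by (rule sum.cong) (auto simp: S_term[OF _ tN, symmetric])
  also have "\<dots> = SE N t * (\<Sum>r<t. SA N r * SK t r) + (SH N t t - SH N t 0)"
    by (simp add: sum.distrib sum_distrib_left sum_lessThan_telescope)
  also have "SA N t * SK (Suc t) t + SA N (Suc t) * SK (Suc t) (Suc t) = SE N t * (SA N t * SK t t) - SH N t t"
    using S_last[OF tN] by (simp add: algebra_simps)
  finally have "(\<Sum>r\<le>Suc t. SA N r * SK (Suc t) r) = SE N t * (\<Sum>r\<le>t. SA N r * SK t r)"
    by (simp add: SH0 lessThan_Suc_atMost[symmetric] algebra_simps)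
  also have "\<dots> = SB N (Suc t)" using Suc tN by (simp add: SB_step)
  finally show ?case .
qed

lemma sum_swap_tri:
  fixes t :: nat shows "(\<Sum>s\<le>t. \<Sum>r\<le>s. f s r) = (\<Sum>r\<le>t. \<Sum>s\<in>{r..t}. f s r :: 'b::comm_monoid_add)"
proof (induction t)
  case 0 then show ?case by simp
next
  case (Suc t)
  have "(\<Sum>r\<le>Suc t. \<Sum>s\<in>{r..Suc t}. f s r) = (\<Sum>r\<le>t. \<Sum>s\<in>{r..Suc t}. f s r) + f (Suc t) (Suc t)"
    by simp
  also have "(\<Sum>r\<le>t. \<Sum>s\<in>{r..Suc t}. f s r) = (\<Sum>r\<le>t. (\<Sum>s\<in>{r..t}. f s r) + f (Suc t) r)"
    by (rule sum.cong) (auto simp: atLeastAtMostSuc_conv add.commute)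
  finally show ?case using Suc by (simp add: sum.distrib add.assoc)
qed

lemma KL': 
  assumes "r \<le> t"
  shows "(\<Sum>s\<in>{r..t}. qw q s / P (t-s) * SK s r) = qw q r * SK t r"
proof -
  have "{r..t} = {0+r..(t-r)+r}" using assms by simp
  then have "(\<Sum>s\<in>{r..t}. qw q s / P (t-s) * SK s r) = (\<Sum>j\<in>{0..t-r}. qw q (j+r) / P (t-(j+r)) * SK (j+r) r)"
    by (simp only: sum.shift_bounds_cl_nat_ivl)
  also have "\<dots> = (\<Sum>j\<le>t-r. KF r (t-r) j)"
    unfolding atLeast0AtMost
    by (rule sum.cong) (simp_all add: KF_def SK_def add.commute mult_2 add.left_commute)
  also have "\<dots> = qw q r * SK t r"
    unfolding KL using assms by (simp add: SK_def mult_2 add.commute add.left_commute)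
  finally show ?thesis .
qed

definition "Tb \<beta> t = (\<Sum>s\<le>t. qw q s / P (t-s) * \<beta> s)"

lemma bailey:
  assumes pair: "\<And>t. t \<le> N \<Longrightarrow> \<beta> t = (\<Sum>r\<le>t. \<alpha> r * SK t r)" and "t \<le> N"
  shows "Tb \<beta> t = (\<Sum>r\<le>t. (qw q r * \<alpha> r) * SK t r)"
proof -
  have "Tb \<beta> t = (\<Sum>s\<le>t. \<Sum>r\<le>s. qw q s / P (t-s) * (\<alpha> r * SK s r))"
    unfolding Tb_def using assms(2) by (intro sum.cong refl) (simp add: pair sum_distrib_left)
  also have "\<dots> = (\<Sum>r\<le>t. \<Sum>s\<in>{r..t}. \<alpha> r * (qw q s / P (t-s) * SK s r))"
    unfolding sum_swap_tri by (simp add: mult_ac)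
  also have "\<dots> = (\<Sum>r\<le>t. \<alpha> r * (qw q r * SK t r))"
  proof (intro sum.cong refl)
    fix r assume "r \<in> {..t}"
    then have rt: "r \<le> t" by simp
    show "(\<Sum>s\<in>{r..t}. \<alpha> r * (qw q s / P (t-s) * SK s r)) = \<alpha> r * (qw q r * SK t r)"
      by (simp only: sum_distrib_left[symmetric] KL'[OF rt])
  qed
  finally show ?thesis by (simp add: mult_ac)
qed

lemma bailey_iter:
  assumes pair: "\<And>t. t \<le> N \<Longrightarrow> \<beta> t = (\<Sum>r\<le>t. \<alpha> r * SK t r)"
  shows "t \<le> N \<Longrightarrow> (Tb ^^ m) \<beta> t = (\<Sum>r\<le>t. (qw q r ^ m * \<alpha> r) * SK t r)"
proof (induction m arbitrary: t)
  case 0 then show ?case using pair by simp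
next
  case (Suc m)
  have "(Tb ^^ Suc m) \<beta> t = Tb ((Tb ^^ m) \<beta>) t" by simp
  also have "\<dots> = (\<Sum>r\<le>t. (qw q r * (qw q r ^ m * \<alpha> r)) * SK t r)"
    by (rule bailey[where N=N]) (use Suc in auto)
  finally show ?case by (simp add: mult_ac)
qed

definition "CW m L k = (\<Prod>j\<in>{1..m}. qw q (k j)) / (P (L - k 1) * (\<Prod>j\<in>{1..m-1}. P (k j - k (Suc j))))"
definition "CS m L \<beta> = (\<Sum>k\<in>chains m L. CW m L k * \<beta> (k m))"

lemma CW_upd:
  assumes "m = Suc p"
  shows "CW (Suc m) L (k(Suc m := s)) = CW m L k * (qw q s / P (k m - s))"
proof -
  have a: "(\<Prod>j\<in>{1..Suc m}. qw q ((k(Suc m := s)) j)) = (\<Prod>j\<in>{1..m}. qw q (k j)) * qw q s"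
    by (simp add: prod.cl_ivl_Suc)
  have b: "(\<Prod>j\<in>{1..Suc m - 1}. P ((k(Suc m := s)) j - (k(Suc m := s)) (Suc j)))
      = (\<Prod>j\<in>{1..m-1}. P (k j - k (Suc j))) * P (k m - s)"
  proof -
    have "(\<Prod>j\<in>{1..Suc p}. P ((k(Suc m := s)) j - (k(Suc m := s)) (Suc j)))
      = (\<Prod>j\<in>{1..p}. P ((k(Suc m := s)) j - (k(Suc m := s)) (Suc j))) * P (k (Suc p) - s)"
      using assms by (simp add: prod.cl_ivl_Suc)
    also have "(\<Prod>j\<in>{1..p}. P ((k(Suc m := s)) j - (k(Suc m := s)) (Suc j))) = (\<Prod>j\<in>{1..p}. P (k j - k (Suc j)))"
      using assms by (intro prod.cong) auto
    finally show ?thesis using assms by simp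
  qed
  have c: "(k(Suc m := s)) 1 = k 1" using assms by simp
  show ?thesis unfolding CW_def a b c
    by (simp add: divide_inverse inverse_mult_distrib mult_ac)
qed

lemma CS_Suc:
  assumes "m \<ge> 1"
  shows "CS (Suc m) L \<beta> = CS m L (Tb \<beta>)"
proof -
  obtain p where m: "m = Suc p" using assms by (cases m) auto
  have "CS (Suc m) L \<beta> = (\<Sum>x\<in>(SIGMA k:chains m L. {..k m}). CW (Suc m) L ((\<lambda>(k,s). k(Suc m := s)) x) * \<beta> (((\<lambda>(k,s). k(Suc m := s)) x) (Suc m)))"
    unfolding CS_def chains_Suc[OF assms] by (rule sum.reindex[OF chains_inj, unfolded comp_def])
  also have "\<dots> = (\<Sum>(k,s)\<in>(SIGMA k:chains m L. {..k m}). CW m L k * (qw q s / P (k m - s) * \<beta> s))"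
    by (intro sum.cong refl) (auto simp: CW_upd[OF m])
  also have "\<dots> = (\<Sum>k\<in>chains m L. \<Sum>s\<le>k m. CW m L k * (qw q s / P (k m - s) * \<beta> s))"
    by (rule sum.Sigma[symmetric]) (use finite_chains[OF assms] in auto)
  also have "\<dots> = CS m L (Tb \<beta>)"
    unfolding CS_def Tb_def by (simp add: sum_distrib_left)
  finally show ?thesis .
qed

lemma CS_one: "CS 1 L \<beta> = Tb \<beta> L"
proof -
  have "CS 1 L \<beta> = (\<Sum>s\<le>L. CW 1 L (\<lambda>j. if j = 1 then s else 0) * \<beta> s)"
    unfolding CS_def chains_one by (subst sum.reindex[OF chains_one_inj]) (simp add: comp_def)
  also have "\<dots> = Tb \<beta> L" unfolding Tb_def CW_def by simp
  finally show ?thesis .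
qed

lemma CS_iter: "m \<ge> 1 \<Longrightarrow> CS m L \<beta> = (Tb ^^ m) \<beta> L"
proof (induction m arbitrary: \<beta> rule: nat_induct_at_least)
  case base then show ?case using CS_one[of L \<beta>] by simp
next
  case (Suc m)
  then show ?case by (simp add: CS_Suc funpow_Suc_right del: funpow.simps)
qed

theorem main_gen:
  fixes m n :: nat
  assumes "m \<ge> 1"
  shows "(\<Sum>i=0..n. inverse (q ^ (2*i)) * q ^ (m * (i^2 + 2*i))
            * ((1 - q ^ (i+1))^3 * (1 + q ^ (i+1)))
              / ((1 - q) * (1 - q ^ (n+1)) * (1 - q ^ (n+2))))
       = (\<Sum>k\<in>chains m n. inverse (q ^ (2 * k m)) * q ^ (\<Sum>j=1..m. k j ^ 2 + 2 * k j)
            * (qpoch q n ^ 2 / (qpoch q (k m) ^ 2 * qpoch q (n - k 1)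
                 * (\<Prod>j=1..m-1. qpoch q (k j - k (Suc j)))))
            * ((1 - q ^ (n+1)) * (1 - q ^ (n+2))
                 / ((1 - q ^ (n - k m + 1)) * (1 - q ^ (n - k m + 2)))))"
proof -
  define \<beta>0 where "\<beta>0 s = inverse (q^(2*s)) / (P s ^ 2 * (1 - q^(n-s+1)) * (1 - q^(n-s+2)))" for s
  define Cst where "Cst = P n ^ 2 * (1 - q^(n+1)) * (1 - q^(n+2))"
  define cc where "cc = (1 - q) * P (n+2) ^ 2"
  define \<alpha>0 where "\<alpha>0 r = SA n r / cc" for r
  have cc_nz: "cc \<noteq> 0" unfolding cc_def using om1 P_nz[of "n+2"] by simp
  have pair: "\<beta>0 t = (\<Sum>r\<le>t. \<alpha>0 r * SK t r)" if "t \<le> n" for t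
  proof -
    have "SB n t = cc * \<beta>0 t" unfolding SB_def cc_def \<beta>0_def
      by (simp add: divide_inverse inverse_mult_distrib mult_ac)
    then have "\<beta>0 t = SB n t / cc" using cc_nz by simp
    also have "\<dots> = (\<Sum>r\<le>t. SA n r * SK t r) / cc" using S_pair[OF that] by simp
    finally show ?thesis unfolding \<alpha>0_def by (simp add: sum_divide_distrib mult_ac)
  qed
  have rhs: "(\<Sum>k\<in>chains m n. inverse (q ^ (2 * k m)) * q ^ (\<Sum>j=1..m. k j ^ 2 + 2 * k j)
            * (qpoch q n ^ 2 / (qpoch q (k m) ^ 2 * qpoch q (n - k 1)
                 * (\<Prod>j=1..m-1. qpoch q (k j - k (Suc j)))))
            * ((1 - q ^ (n+1)) * (1 - q ^ (n+2))
                 / ((1 - q ^ (n - k m + 1)) * (1 - q ^ (n - k m + 2)))))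
     = Cst * CS m n \<beta>0"
    unfolding CS_def sum_distrib_left
  proof (intro sum.cong refl)
    fix k
    have pw: "q ^ (\<Sum>j=1..m. k j ^ 2 + 2 * k j) = (\<Prod>j=1..m. qw q (k j))"
      by (simp add: power_sum qw_def power2_eq_square)
    show "inverse (q ^ (2 * k m)) * q ^ (\<Sum>j=1..m. k j ^ 2 + 2 * k j)
            * (qpoch q n ^ 2 / (qpoch q (k m) ^ 2 * qpoch q (n - k 1)
                 * (\<Prod>j=1..m-1. qpoch q (k j - k (Suc j)))))
            * ((1 - q ^ (n+1)) * (1 - q ^ (n+2))
                 / ((1 - q ^ (n - k m + 1)) * (1 - q ^ (n - k m + 2))))
          = Cst * (CW m n k * \<beta>0 (k m))"
      unfolding pw CW_def \<beta>0_def Cst_def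
      by (simp add: divide_inverse inverse_mult_distrib mult_ac)
  qed
  have it: "CS m n \<beta>0 = (\<Sum>r\<le>n. (qw q r ^ m * \<alpha>0 r) * SK n r)"
    unfolding CS_iter[OF assms] by (rule bailey_iter[where N=n]) (use pair in auto)
  have lhs: "(\<Sum>i=0..n. inverse (q ^ (2*i)) * q ^ (m * (i^2 + 2*i))
            * ((1 - q ^ (i+1))^3 * (1 + q ^ (i+1)))
              / ((1 - q) * (1 - q ^ (n+1)) * (1 - q ^ (n+2))))
     = (\<Sum>i\<le>n. Cst * ((qw q i ^ m * \<alpha>0 i) * SK n i))"
    unfolding atLeast0AtMost
  proof (intro sum.cong refl)
    fix i
    have qwm: "qw q i ^ m = q ^ (m * (i^2 + 2*i))"
      by (simp add: qw_def power_mult[symmetric] power2_eq_square mult.commute)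
    have p2: "P (n+2) = P n * (1 - q^(n+1)) * (1 - q^(n+2))" by (rule PE2) simp_all
    have nz: "1 - q^(n+1) \<noteq> 0" "1 - q^(n+2) \<noteq> 0" by (rule om_nz; simp)+
    show "inverse (q ^ (2*i)) * q ^ (m * (i^2 + 2*i))
            * ((1 - q ^ (i+1))^3 * (1 + q ^ (i+1)))
              / ((1 - q) * (1 - q ^ (n+1)) * (1 - q ^ (n+2)))
          = Cst * ((qw q i ^ m * \<alpha>0 i) * SK n i)"
      unfolding qwm Cst_def \<alpha>0_def cc_def SA_def SK_def p2
      apply (rule alg7[where x="q^(i+1)"])
      apply (simp_all only: om1 nz P_nz not_False_eq_True)
      apply (simp_all add: power_add power_mult power2_eq_square mult_ac)
      done
  qed
  show ?thesis unfolding lhs rhs it by (simp add: sum_distrib_left)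
qed

end

lemma qv_pow: "qv ^ l = Fract ([:0,1:] ^ l) 1"
  by (induction l) (simp_all add: qv_def One_fract_def)

interpretation QV: qctx qv
proof
  show "qv \<noteq> 0" by (simp add: qv_def Zero_fract_def eq_fract)
next
  fix l :: nat assume "0 < l"
  have "[:0,1:] ^ l \<noteq> (1 :: rat poly)"
  proof
    assume "[:0,1:] ^ l = (1 :: rat poly)"
    then have "poly ([:0,1:] ^ l) 0 = poly (1 :: rat poly) 0" by simp
    with \<open>0 < l\<close> show False by (simp add: poly_power power_0_left)
  qed
  then show "qv ^ l \<noteq> 1" by (simp add: qv_pow One_fract_def eq_fract)
qed

theorem mainTheorem3:
  fixes m n :: nat
  assumes "m \<ge> 1"
  shows "(\<Sum>i=0..n. inverse (qv ^ (2*i)) * qv ^ (m * (i^2 + 2*i))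
            * ((1 - qv ^ (i+1))^3 * (1 + qv ^ (i+1)))
              / ((1 - qv) * (1 - qv ^ (n+1)) * (1 - qv ^ (n+2))))
       = (\<Sum>k\<in>chains m n. inverse (qv ^ (2 * k m)) * qv ^ (\<Sum>j=1..m. k j ^ 2 + 2 * k j)
            * (qpoch qv n ^ 2 / (qpoch qv (k m) ^ 2 * qpoch qv (n - k 1)
                 * (\<Prod>j=1..m-1. qpoch qv (k j - k (Suc j)))))
            * ((1 - qv ^ (n+1)) * (1 - qv ^ (n+2))
                 / ((1 - qv ^ (n - k m + 1)) * (1 - qv ^ (n - k m + 2)))))"
  by (rule QV.main_gen[OF assms])


end
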